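(* Let $U\subset\mathbb{R}^2$ be an open neighbourhood of the origin whose closure is diffeomorphic to the closed unit disk, let $V_1:U\to\mathbb{R}$ be smooth, and consider the planar Stark system with Hamiltonian $H(q,p)=\tfrac12|p|^2+V(q)$, $V(q)=-\tfrac{1}{|q|}+V_1(q)$, on $T^*(U\setminus\{0\})$ with the standard symplectic form. Let $c<c_1$ and let $q:S^1\to\mathcal{K}_c^b$ be a periodic orbit of energy $c$ (orbits are allowed to pass through the origin after regularization). Assume that $q$ admits an inverse self-tangency at one point, i.e. there are $t_0\neq t_1$ with $q(t_0)=q(t_1)$ and $\dot q(t_0)=-\lambda\dot q(t_1)$ for some $\lambda>0$. Then every point on the orbit $q$ is an inverse self-tangency. Moreover, either $q$ touches the boundary of the Hill's region $\mathcal{K}_c^b$ or $q$ collides with the origin.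
   Context: $c_1\in\mathbb{R}\cup\{\infty\}$ is an energy such that for every $c<c_1$: $c$ is a regular value of $V$, and the Hill's region $\mathcal{K}_c=\{q\in U: V(q)\le c\}$ contains a unique bounded component $\mathcal{K}_c^b$ whose closure is diffeomorphic to the closed unit disk. Periodic orbits are considered in the regularized system, so that they may pass through the origin (collisions). A point of the orbit is an inverse self-tangency if the orbit passes through it twice with opposite (nonzero) tangent directions. *)

theory Defs
  imports "HOL-Analysis.Analysis"
begin

fun Ck_on :: "nat \<Rightarrow> 'a::real_normed_vector set \<Rightarrow> ('a \<Rightarrow> 'b::real_normed_vector) \<Rightarrow> bool" where
  "Ck_on 0 S f = continuous_on S f"
| "Ck_on (Suc k) S f =
     (\<exists>f'. (\<forall>x\<in>S. (f has_derivative f' x) (at x)) \<and> (\<forall>v. Ck_on k S (\<lambda>x. f' x v)))"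

definition smooth_on :: "'a::real_normed_vector set \<Rightarrow> ('a \<Rightarrow> 'b::real_normed_vector) \<Rightarrow> bool" where
  "smooth_on S f \<longleftrightarrow> (\<forall>k. Ck_on k S f)"

text \<open>Diffeomorphism between (closed) subsets of the plane: smooth maps (in the sense of
  admitting smooth extensions to open neighbourhoods) that are mutually inverse bijections.\<close>
definition diffeomorphic_sets :: "(real^2) set \<Rightarrow> (real^2) set \<Rightarrow> bool" where
  "diffeomorphic_sets S T \<longleftrightarrow>
     (\<exists>f g A B. open A \<and> open B \<and> S \<subseteq> A \<and> T \<subseteq> B \<and>
        smooth_on A f \<and> smooth_on B g \<and> f ` S = T \<and> g ` T = S \<and>
        (\<forall>x\<in>S. g (f x) = x) \<and> (\<forall>y\<in>T. f (g y) = y))"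

definition stark_V :: "(real^2 \<Rightarrow> real) \<Rightarrow> real^2 \<Rightarrow> real" where
  "stark_V V1 x = - 1 / norm x + V1 x"

text \<open>Hill's region K_c = {q in U : V(q) <= c}; the origin (where V = -infinity) is included.\<close>
definition hill_region :: "(real^2) set \<Rightarrow> (real^2 \<Rightarrow> real) \<Rightarrow> real \<Rightarrow> (real^2) set" where
  "hill_region U V1 c = {x \<in> U. x = 0 \<or> stark_V V1 x \<le> c}"

definition regular_value :: "(real^2) set \<Rightarrow> (real^2 \<Rightarrow> real) \<Rightarrow> real \<Rightarrow> bool" where
  "regular_value U V1 c \<longleftrightarrow>
     (\<forall>x\<in>U - {0}. stark_V V1 x = c \<longrightarrow>
        (\<exists>D. (stark_V V1 has_derivative D) (at x) \<and> D \<noteq> (\<lambda>h. 0)))"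

text \<open>The standing assumption on energies below c1.\<close>
definition good_energy :: "(real^2) set \<Rightarrow> (real^2 \<Rightarrow> real) \<Rightarrow> real \<Rightarrow> bool" where
  "good_energy U V1 c \<longleftrightarrow> regular_value U V1 c \<and>
     (\<exists>!C. C \<in> components (hill_region U V1 c) \<and> bounded C) \<and>
     (\<forall>C. C \<in> components (hill_region U V1 c) \<and> bounded C \<longrightarrow>
          diffeomorphic_sets (closure C) (cball 0 1))"

definition hill_bounded :: "(real^2) set \<Rightarrow> (real^2 \<Rightarrow> real) \<Rightarrow> real \<Rightarrow> (real^2) set" where
  "hill_bounded U V1 c = (THE C. C \<in> components (hill_region U V1 c) \<and> bounded C)"

text \<open>A T-periodic orbit of energy c of the (Levi-Civita regularised) Stark system, in
  physical time: q is continuous and T-periodic, collision times are isolated, away from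
  collisions q is C^2 with velocity q' and satisfies Newton's equation q'' = - grad V(q) and
  the energy relation; at a collision the regularised flow reflects the orbit,
  q(t*+s) = q(t*-s).\<close>
definition stark_periodic_orbit ::
  "(real^2) set \<Rightarrow> (real^2 \<Rightarrow> real) \<Rightarrow> real \<Rightarrow> real \<Rightarrow> (real \<Rightarrow> real^2) \<Rightarrow> (real \<Rightarrow> real^2) \<Rightarrow> bool" where
  "stark_periodic_orbit U V1 c T q q' \<longleftrightarrow>
     T > 0 \<and> continuous_on UNIV q \<and> (\<forall>t. q (t + T) = q t) \<and> (\<forall>t. q t \<in> U) \<and>
     (\<forall>t. q t = 0 \<longrightarrow> (\<exists>e>0. \<forall>s. 0 < \<bar>s\<bar> \<and> \<bar>s\<bar> < e \<longrightarrow> q (t + s) \<noteq> 0 \<and> q (t + s) = q (t - s))) \<and>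
     (\<exists>q''. \<forall>t. q t \<noteq> 0 \<longrightarrow>
        (q has_vector_derivative q' t) (at t) \<and>
        (q' has_vector_derivative q'' t) (at t) \<and>
        (stark_V V1 has_derivative (\<lambda>h. - (q'' t \<bullet> h))) (at (q t)) \<and>
        (norm (q' t))\<^sup>2 / 2 + stark_V V1 (q t) = c)"

end

theory Submission
  imports Defs
begin

lemma loc_uniq:
  fixes p r p' r' :: "real \<Rightarrow> real^2" and G :: "real^2 \<Rightarrow> real^2"
  assumes lip: "\<forall>x\<in>cball x0 e. \<forall>y\<in>cball x0 e. norm (G x - G y) \<le> L * norm (x - y)"
    and ab: "a \<le> b"
    and inb: "\<forall>s\<in>{a..b}. p s \<in> cball x0 e \<and> r s \<in> cball x0 e"
    and dp: "\<forall>s\<in>{a..b}. (p has_vector_derivative p' s) (at s) \<and> (p' has_vector_derivative - G (p s)) (at s)"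
    and dr: "\<forall>s\<in>{a..b}. (r has_vector_derivative r' s) (at s) \<and> (r' has_vector_derivative - G (r s)) (at s)"
    and i0: "p a = r a" and i1: "p' a = r' a"
  shows "\<forall>s\<in>{a..b}. p s = r s"
proof -
  define K where "K = 1 + \<bar>L\<bar>"
  define d where "d s = p s - r s" for s
  define d' where "d' s = p' s - r' s" for s
  define w where "w s = d s \<bullet> d s + d' s \<bullet> d' s" for s
  define z where "z s = exp (- K * s) * w s" for s
  have wd: "(w has_real_derivative (2 * (d s \<bullet> d' s) + 2 * (d' s \<bullet> (G (r s) - G (p s))))) (at s)"
    if s: "s \<in> {a..b}" for s
  proof -
    have h1: "(d has_vector_derivative d' s) (at s)"
      unfolding d_def d'_def using dp dr s by (auto intro!: derivative_intros)
    have h2: "(d' has_vector_derivative (G (r s) - G (p s))) (at s)"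
      unfolding d'_def using dp dr s by (auto intro!: derivative_eq_intros)
    have "((\<lambda>s. d s \<bullet> d s + d' s \<bullet> d' s) has_derivative
       (\<lambda>h. d s \<bullet> (h *\<^sub>R d' s) + (h *\<^sub>R d' s) \<bullet> d s + (d' s \<bullet> (h *\<^sub>R (G (r s) - G (p s))) + (h *\<^sub>R (G (r s) - G (p s))) \<bullet> d' s))) (at s)"
      using h1 h2 unfolding has_vector_derivative_def
      by (intro derivative_eq_intros) auto
    then show ?thesis unfolding w_def has_field_derivative_def
      by (rule has_derivative_eq_rhs) (auto simp: fun_eq_iff inner_commute algebra_simps)
  qed
  have bound: "2 * (d s \<bullet> d' s) + 2 * (d' s \<bullet> (G (r s) - G (p s))) \<le> K * w s"
    if s: "s \<in> {a..b}" for s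
  proof -
    have g: "norm (G (r s) - G (p s)) \<le> \<bar>L\<bar> * norm (d s)"
    proof -
      have "norm (G (r s) - G (p s)) = norm (G (p s) - G (r s))" by (simp add: norm_minus_commute)
      also have "\<dots> \<le> L * norm (p s - r s)" using lip inb s by blast
      also have "\<dots> \<le> \<bar>L\<bar> * norm (d s)" unfolding d_def by (simp add: mult_right_mono)
      finally show ?thesis .
    qed
    have "d s \<bullet> d' s \<le> norm (d s) * norm (d' s)" by (rule norm_cauchy_schwarz)
    moreover have "d' s \<bullet> (G (r s) - G (p s)) \<le> norm (d' s) * (\<bar>L\<bar> * norm (d s))"
      using g norm_cauchy_schwarz[of "d' s" "G (r s) - G (p s)"] mult_left_mono[OF g, of "norm (d' s)"] by simp
    moreover have sq: "2 * (norm (d s) * norm (d' s)) \<le> norm (d s)^2 + norm (d' s)^2"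
    proof -
      have "0 \<le> (norm (d s) - norm (d' s))^2" by simp
      then show ?thesis by (simp add: power2_eq_square algebra_simps)
    qed
    moreover have ws: "w s = norm (d s)^2 + norm (d' s)^2" unfolding w_def by (simp add: power2_norm_eq_inner)
    ultimately have "2 * (d s \<bullet> d' s) + 2 * (d' s \<bullet> (G (r s) - G (p s))) \<le> (1 + \<bar>L\<bar>) * (2 * (norm (d s) * norm (d' s)))"
      by (simp add: algebra_simps)
    also have "\<dots> \<le> (1 + \<bar>L\<bar>) * w s"
      using sq ws by (intro mult_left_mono) auto
    finally show ?thesis unfolding K_def .
  qed
  have zmono: "z s \<le> z a" if s: "s \<in> {a..b}" for s
  proof (rule DERIV_nonpos_imp_nonincreasing[of a s z])
    show "a \<le> s" using s by simp
    fix x assume x: "a \<le> x" "x \<le> s"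
    then have xab: "x \<in> {a..b}" using s by auto
    have "(z has_real_derivative (exp (- K * x) * (- K) * w x + exp (- K * x) * (2 * (d x \<bullet> d' x) + 2 * (d' x \<bullet> (G (r x) - G (p x)))))) (at x)"
      unfolding z_def using wd[OF xab] by (auto intro!: derivative_eq_intros)
    moreover have "exp (- K * x) * (- K) * w x + exp (- K * x) * (2 * (d x \<bullet> d' x) + 2 * (d' x \<bullet> (G (r x) - G (p x)))) \<le> 0"
    proof -
      have "exp (- K * x) * (2 * (d x \<bullet> d' x) + 2 * (d' x \<bullet> (G (r x) - G (p x)))) \<le> exp (- K * x) * (K * w x)"
        using bound[OF xab] by (simp add: mult_left_mono)
      then show ?thesis by (simp add: algebra_simps)
    qed
    ultimately show "\<exists>y. (z has_real_derivative y) (at x) \<and> y \<le> 0" by blast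
  qed
  show ?thesis
  proof
    fix s assume s: "s \<in> {a..b}"
    have "z a = 0" unfolding z_def w_def d_def d'_def using i0 i1 by simp
    moreover have "w s \<ge> 0" unfolding w_def by simp
    moreover have "z s \<ge> 0" unfolding z_def using \<open>w s \<ge> 0\<close> by simp
    ultimately have "z s = 0" using zmono[OF s] by linarith
    then have "w s = 0" unfolding z_def by simp
    then have "d s \<bullet> d s = 0" unfolding w_def
      using inner_ge_zero[of "d s"] inner_ge_zero[of "d' s"] by linarith
    then show "p s = r s" unfolding d_def by simp
  qed
qed

lemma c1_lip:
  fixes G :: "real^2 \<Rightarrow> real^2"
  assumes S: "open S" "x0 \<in> S" and dG: "\<forall>x\<in>S. (G has_derivative G' x) (at x)"
    and cG: "\<forall>h. continuous_on S (\<lambda>x. G' x h)"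
  shows "\<exists>e>0. \<exists>L. \<forall>x\<in>cball x0 e. \<forall>y\<in>cball x0 e. norm (G x - G y) \<le> L * norm (x - y)"
proof -
  obtain e where e: "e > 0" "cball x0 e \<subseteq> S" using S open_contains_cball by blast
  have "\<forall>i\<in>(Basis::(real^2) set). \<exists>M. \<forall>x\<in>cball x0 e. norm (G' x i) \<le> M"
  proof
    fix i :: "real^2"
    have "compact ((\<lambda>x. G' x i) ` cball x0 e)"
      by (rule compact_continuous_image[OF continuous_on_subset[OF spec[OF cG] e(2)]]) simp
    then have "bounded ((\<lambda>x. G' x i) ` cball x0 e)" by (rule compact_imp_bounded)
    then obtain a where "\<forall>z\<in>(\<lambda>x. G' x i) ` cball x0 e. norm z \<le> a" unfolding bounded_iff by blast
    then show "\<exists>M. \<forall>x\<in>cball x0 e. norm (G' x i) \<le> M" by auto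
  qed
  then obtain M where M: "\<forall>i\<in>(Basis::(real^2) set). \<forall>x\<in>cball x0 e. norm (G' x i) \<le> M i"
    by metis
  have "\<forall>x\<in>cball x0 e. \<forall>y\<in>cball x0 e. norm (G x - G y) \<le> (\<Sum>i\<in>Basis. M i) * norm (x - y)"
  proof (intro ballI)
    fix x y assume x: "x \<in> cball x0 e" and y: "y \<in> cball x0 e"
    show "norm (G x - G y) \<le> (\<Sum>i\<in>Basis. M i) * norm (x - y)"
    proof (rule differentiable_bound[of "cball x0 e" G G'])
      show "convex (cball x0 e)" by simp
      fix z assume z: "z \<in> cball x0 e"
      then show "(G has_derivative G' z) (at z within cball x0 e)"
        using dG e has_derivative_at_withinI by blast
      have bl: "bounded_linear (G' z)" using dG e z has_derivative_bounded_linear by blast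
      have "onorm (G' z) \<le> (\<Sum>i\<in>Basis. norm (G' z i))" by (rule onorm_componentwise[OF bl])
      also have "\<dots> \<le> (\<Sum>i\<in>Basis. M i)" using M z by (intro sum_mono) auto
      finally show "onorm (G' z) \<le> (\<Sum>i\<in>Basis. M i)" .
    qed (use x y in auto)
  qed
  then show ?thesis using e by blast
qed

lemma linear_as_inner:
  fixes f :: "real^2 \<Rightarrow> real"
  assumes "linear f"
  shows "f h = (\<Sum>i\<in>UNIV. f (axis i 1) *\<^sub>R axis i 1) \<bullet> h"
proof -
  have "f h = f (\<Sum>i\<in>UNIV. h $ i *\<^sub>R axis i 1)"
    using basis_expansion[of h] by (simp add: scalar_mult_eq_scaleR)
  also have "\<dots> = (\<Sum>i\<in>UNIV. h $ i * f (axis i 1))"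
    using assms by (simp add: linear_sum linear_scale)
  also have "\<dots> = (\<Sum>i\<in>UNIV. f (axis i 1) *\<^sub>R axis i 1) \<bullet> h"
    by (simp add: inner_sum_left inner_axis' mult.commute)
  finally show ?thesis .
qed

lemma N_deriv:
  fixes x :: "real^2"
  assumes "x \<noteq> 0"
  shows "((\<lambda>x. inverse (norm x ^ 3) *\<^sub>R x) has_derivative
     (\<lambda>h. inverse (norm x ^ 3) *\<^sub>R h - (3 * (h \<bullet> x) / norm x ^ 5) *\<^sub>R x)) (at x)"
proof -
  have n: "norm x \<noteq> 0" using assms by simp
  note nd = has_derivative_norm[OF assms]
  have p: "((\<lambda>x. norm x ^ 3) has_derivative (\<lambda>h. of_nat 3 * (h \<bullet> sgn x) * norm x ^ (3 - 1))) (at x)"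
    by (rule has_derivative_power[OF nd])
  have i: "((\<lambda>x. inverse (norm x ^ 3)) has_derivative (\<lambda>h. - (inverse (norm x ^ 3) * (of_nat 3 * (h \<bullet> sgn x) * norm x ^ (3 - 1)) * inverse (norm x ^ 3)))) (at x)"
    by (rule Deriv.has_derivative_inverse[OF _ p]) (simp add: n assms)
  have s: "((\<lambda>x. inverse (norm x ^ 3) *\<^sub>R x) has_derivative (\<lambda>h. inverse (norm x ^ 3) *\<^sub>R h + (- (inverse (norm x ^ 3) * (of_nat 3 * (h \<bullet> sgn x) * norm x ^ (3 - 1)) * inverse (norm x ^ 3))) *\<^sub>R x)) (at x)"
    by (rule has_derivative_scaleR[OF i has_derivative_ident])
  show ?thesis
    apply (rule has_derivative_eq_rhs[OF s])
    apply (auto simp: fun_eq_iff sgn_div_norm field_simps n)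
    apply (metis power_Suc numeral_eq_Suc pred_numeral_simps add_One)
    done
qed

lemma invnorm_deriv:
  fixes x :: "real^2"
  assumes "x \<noteq> 0"
  shows "((\<lambda>x. - 1 / norm x) has_derivative (\<lambda>h. (inverse (norm x ^ 3) *\<^sub>R x) \<bullet> h)) (at x)"
proof -
  have n: "norm x \<noteq> 0" using assms by simp
  note nd = has_derivative_norm[OF assms]
  have i: "((\<lambda>x. inverse (norm x)) has_derivative (\<lambda>h. - (inverse (norm x) * (h \<bullet> sgn x) * inverse (norm x)))) (at x)"
    by (rule Deriv.has_derivative_inverse[OF _ nd]) (simp add: n assms)
  have "((\<lambda>x. - inverse (norm x)) has_derivative (\<lambda>h. - (- (inverse (norm x) * (h \<bullet> sgn x) * inverse (norm x))))) (at x)"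
    by (rule has_derivative_minus[OF i])
  then show ?thesis
    apply (simp add: divide_inverse)
    apply (rule has_derivative_eq_rhs)
    apply assumption
    apply (auto simp: fun_eq_iff sgn_div_norm field_simps n inner_commute power2_eq_square power3_eq_cube)
    done
qed

lemma grad_setup:
  assumes sm: "smooth_on U V1" and U: "open U"
  shows "\<exists>G G'. (\<forall>x\<in>U-{0}. (G has_derivative G' x) (at x)) \<and> (\<forall>h. continuous_on (U-{0}) (\<lambda>x. G' x h))
     \<and> (\<forall>x\<in>U-{0}. (stark_V V1 has_derivative (\<lambda>h. G x \<bullet> h)) (at x))"
proof -
  have "Ck_on (Suc (Suc 0)) U V1" using sm unfolding smooth_on_def by blast
  then obtain f' where f'1: "\<forall>x\<in>U. (V1 has_derivative f' x) (at x)"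
    and f'2: "\<forall>v. \<exists>g. (\<forall>x\<in>U. ((\<lambda>x. f' x v) has_derivative g x) (at x)) \<and> (\<forall>w. continuous_on U (\<lambda>x. g x w))"
    by auto
  then obtain g where g: "\<forall>v. (\<forall>x\<in>U. ((\<lambda>x. f' x v) has_derivative g v x) (at x)) \<and> (\<forall>w. continuous_on U (\<lambda>x. g v x w))"
    by metis
  define G where "G x = inverse (norm x ^ 3) *\<^sub>R x + (\<Sum>i\<in>UNIV. f' x (axis i 1) *\<^sub>R axis i (1::real))" for x :: "real^2"
  define G' where "G' x h = (inverse (norm x ^ 3) *\<^sub>R h - (3 * (h \<bullet> x) / norm x ^ 5) *\<^sub>R x)
      + (\<Sum>i\<in>UNIV. g (axis i 1) x h *\<^sub>R axis i (1::real))" for x h :: "real^2"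
  have d1: "(G has_derivative G' x) (at x)" if x: "x \<in> U - {0}" for x
    unfolding G_def G'_def
    apply (rule has_derivative_add)
     apply (rule N_deriv) using x apply simp
    apply (rule has_derivative_sum)
    apply (rule has_derivative_scaleR_left)
    using g x apply blast
    done
  have c1: "continuous_on (U-{0}) (\<lambda>x. G' x h)" for h
    unfolding G'_def
  proof (intro continuous_on_add continuous_on_diff continuous_on_sum continuous_on_scaleR continuous_on_const continuous_on_id)
    show "continuous_on (U - {0}) (\<lambda>x. inverse (norm x ^ 3))"
      by (intro continuous_on_inverse continuous_on_power continuous_on_norm continuous_on_id) auto
    show "continuous_on (U - {0}) (\<lambda>x. 3 * (h \<bullet> x) / norm x ^ 5)"
      by (intro continuous_on_divide continuous_on_power continuous_on_norm continuous_on_id continuous_on_mult continuous_on_const continuous_on_inner) auto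
    fix i :: 2
    show "continuous_on (U - {0}) (\<lambda>x. g (axis i 1) x h)"
      using g continuous_on_subset[of U _ "U - {0}"] by blast
  qed
  have d2: "(stark_V V1 has_derivative (\<lambda>h. G x \<bullet> h)) (at x)" if x: "x \<in> U - {0}" for x
  proof -
    have lf: "linear (f' x)" using f'1 x has_derivative_linear by blast
    have x0: "x \<noteq> 0" "x \<in> U" using x by auto
    have "((\<lambda>x. - 1 / norm x + V1 x) has_derivative (\<lambda>h. (inverse (norm x ^ 3) *\<^sub>R x) \<bullet> h + f' x h)) (at x)"
      by (rule has_derivative_add[OF invnorm_deriv[OF x0(1)] bspec[OF f'1 x0(2)]])
    moreover have "(\<lambda>h. (inverse (norm x ^ 3) *\<^sub>R x) \<bullet> h + f' x h) = (\<lambda>h. G x \<bullet> h)"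
    proof -
      define gv where "gv = (\<Sum>i\<in>UNIV. f' x (axis i 1) *\<^sub>R axis i (1::real))"
      have e: "f' x h = gv \<bullet> h" for h unfolding gv_def by (rule linear_as_inner[OF lf])
      have Gx: "G x = inverse (norm x ^ 3) *\<^sub>R x + gv" unfolding G_def gv_def by simp
      show ?thesis unfolding Gx fun_eq_iff e inner_add_left by simp
    qed
    ultimately show ?thesis unfolding stark_V_def[abs_def] by simp
  qed
  show ?thesis using d1 c1 d2 by blast
qed

lemma forward:
  fixes q q' :: "real \<Rightarrow> real^2" and G :: "real^2 \<Rightarrow> real^2"
  assumes cont: "continuous_on UNIV q"
   and coll: "\<forall>t. q t = 0 \<longrightarrow> (\<exists>e>0. \<forall>s. 0 < \<bar>s\<bar> \<and> \<bar>s\<bar> < e \<longrightarrow> q (t + s) \<noteq> 0 \<and> q (t + s) = q (t - s))"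
   and ode: "\<forall>t. q t \<noteq> 0 \<longrightarrow> (q has_vector_derivative q' t) (at t) \<and> (q' has_vector_derivative - G (q t)) (at t)"
   and lip: "\<forall>t. q t \<noteq> 0 \<longrightarrow> (\<exists>e>0. \<exists>L. 0 \<notin> cball (q t) e \<and>
        (\<forall>x\<in>cball (q t) e. \<forall>y\<in>cball (q t) e. norm (G x - G y) \<le> L * norm (x - y)))"
   and ab: "q a = q b" "q b \<noteq> 0" "q' a = - q' b"
  shows "\<forall>s\<ge>0. q (a + s) = q (b - s)"
proof (rule ccontr)
  define p where "p s = q (a + s)" for s
  define r where "r s = q (b - s)" for s
  define pd where "pd s = q' (a + s)" for s
  define rd where "rd s = - q' (b - s)" for s
  have P1: "(p has_vector_derivative pd s) (at s) \<and> (pd has_vector_derivative - G (p s)) (at s)"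
    if "p s \<noteq> 0" for s
  proof -
    have o: "(q has_vector_derivative q' (a+s)) (at (a+s))" "(q' has_vector_derivative - G (q (a+s))) (at (a+s))"
      using ode that unfolding p_def by auto
    have i: "((\<lambda>s. a + s) has_vector_derivative 1) (at s)" by (auto intro!: derivative_eq_intros)
    have "((q \<circ> (\<lambda>s. a + s)) has_vector_derivative (1 *\<^sub>R q' (a+s))) (at s)"
      by (rule vector_diff_chain_at[OF i]) (use o in simp)
    moreover have "((q' \<circ> (\<lambda>s. a + s)) has_vector_derivative (1 *\<^sub>R - G (q (a+s)))) (at s)"
      by (rule vector_diff_chain_at[OF i]) (use o in simp)
    ultimately show ?thesis unfolding p_def pd_def o_def by simp
  qed
  have P2: "(r has_vector_derivative rd s) (at s) \<and> (rd has_vector_derivative - G (r s)) (at s)"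
    if "r s \<noteq> 0" for s
  proof -
    have o: "(q has_vector_derivative q' (b-s)) (at (b-s))" "(q' has_vector_derivative - G (q (b-s))) (at (b-s))"
      using ode that unfolding r_def by auto
    have i: "((\<lambda>s. b - s) has_vector_derivative -1) (at s)" by (auto intro!: derivative_eq_intros)
    have "((q \<circ> (\<lambda>s. b - s)) has_vector_derivative ((-1) *\<^sub>R q' (b-s))) (at s)"
      by (rule vector_diff_chain_at[OF i]) (use o in simp)
    moreover have "((q' \<circ> (\<lambda>s. b - s)) has_vector_derivative ((-1) *\<^sub>R - G (q (b-s)))) (at s)"
      by (rule vector_diff_chain_at[OF i]) (use o in simp)
    then have "((\<lambda>s. - (q' \<circ> (\<lambda>s. b - s)) s) has_vector_derivative - ((-1) *\<^sub>R - G (q (b-s)))) (at s)"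
      by (rule derivative_intros)
    ultimately show ?thesis unfolding r_def rd_def o_def by simp
  qed
  have cp: "continuous_on UNIV p" unfolding p_def
    by (rule continuous_on_compose2[OF cont]) (auto intro!: continuous_intros)
  have cr: "continuous_on UNIV r" unfolding r_def
    by (rule continuous_on_compose2[OF cont]) (auto intro!: continuous_intros)
  assume "\<not> (\<forall>s\<ge>0. q (a + s) = q (b - s))"
  then obtain s1 where s1: "s1 \<ge> 0" "p s1 \<noteq> r s1" unfolding p_def r_def by auto
  define A where "A = {s\<in>{0..s1}. p s \<noteq> r s}"
  define \<sigma> where "\<sigma> = Inf A"
  have An: "A \<noteq> {}" "bdd_below A" "s1 \<in> A" using s1 unfolding A_def by (auto intro: bdd_belowI[of _ 0])
  have \<sigma>0: "0 \<le> \<sigma>" unfolding \<sigma>_def using An by (intro cInf_greatest) (auto simp: A_def)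
  have \<sigma>s1: "\<sigma> \<le> s1" unfolding \<sigma>_def using An by (intro cInf_lower) auto
  have below: "p s = r s" if "0 \<le> s" "s < \<sigma>" for s
  proof (rule ccontr)
    assume "p s \<noteq> r s"
    then have "s \<in> A" using that \<sigma>s1 unfolding A_def by auto
    then have "\<sigma> \<le> s" unfolding \<sigma>_def using An by (intro cInf_lower) auto
    then show False using that by simp
  qed
  have p0: "p 0 = r 0" unfolding p_def r_def using ab by simp
  have eq\<sigma>: "p \<sigma> = r \<sigma>"
  proof (cases "\<sigma> = 0")
    case True then show ?thesis using p0 by simp
  next
    case False
    then have "0 < \<sigma>" using \<sigma>0 by simp
    have Z: "closed {s. p s = r s}" by (rule closed_Collect_eq[OF cp cr])
    have "{0..<\<sigma>} \<subseteq> {s. p s = r s}" using below by auto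
    then have "closure {0..<\<sigma>} \<subseteq> {s. p s = r s}" using Z closure_minimal by blast
    then have sub: "{0..\<sigma>} \<subseteq> {s. p s = r s}" using \<open>0 < \<sigma>\<close> by simp
    have "\<sigma> \<in> {0..\<sigma>}" using \<open>0 < \<sigma>\<close> by simp
    then show ?thesis using sub by blast
  qed
  have step: "\<exists>\<delta>>0. \<forall>s\<in>{\<sigma>..\<sigma>+\<delta>}. p s = r s"
  proof (cases "p \<sigma> = 0")
    case False
    then have "q (a + \<sigma>) \<noteq> 0" unfolding p_def by simp
    then obtain e L where e: "e > 0" "0 \<notin> cball (p \<sigma>) e"
      and L: "\<forall>x\<in>cball (p \<sigma>) e. \<forall>y\<in>cball (p \<sigma>) e. norm (G x - G y) \<le> L * norm (x - y)"
      using lip unfolding p_def by blast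
    obtain d1 where d1: "d1 > 0" "\<forall>s. dist s \<sigma> < d1 \<longrightarrow> dist (p s) (p \<sigma>) < e"
      using cp e(1) unfolding continuous_on_iff by blast
    obtain d2 where d2: "d2 > 0" "\<forall>s. dist s \<sigma> < d2 \<longrightarrow> dist (r s) (r \<sigma>) < e"
      using cr e(1) unfolding continuous_on_iff by blast
    define \<delta> where "\<delta> = min d1 d2 / 2"
    have \<delta>: "\<delta> > 0" unfolding \<delta>_def using d1 d2 by simp
    have inb: "\<forall>s\<in>{\<sigma>..\<sigma>+\<delta>}. p s \<in> cball (p \<sigma>) e \<and> r s \<in> cball (p \<sigma>) e"
    proof
      fix s assume s: "s \<in> {\<sigma>..\<sigma>+\<delta>}"
      then have "dist s \<sigma> < d1" "dist s \<sigma> < d2" unfolding \<delta>_def dist_real_def using d1 d2 by auto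
      then show "p s \<in> cball (p \<sigma>) e \<and> r s \<in> cball (p \<sigma>) e"
        using d1 d2 eq\<sigma> by (auto simp: dist_commute less_imp_le)
    qed
    have nz: "p s \<noteq> 0" "r s \<noteq> 0" if "s \<in> {\<sigma>..\<sigma>+\<delta>}" for s
      using inb that e(2) by metis+
    have dd: "pd \<sigma> = rd \<sigma>"
    proof (cases "\<sigma> = 0")
      case True then show ?thesis unfolding pd_def rd_def using ab by simp
    next
      case False
      then have s0: "0 < \<sigma>" using \<sigma>0 by simp
      have "\<sigma> \<in> {\<sigma>..\<sigma>+\<delta>}" using \<delta> by simp
      have hp: "(p has_vector_derivative pd \<sigma>) (at \<sigma> within {0..\<sigma>})"
        using P1 nz[OF \<open>\<sigma> \<in> _\<close>] has_vector_derivative_at_within by blast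
      have hr: "(r has_vector_derivative rd \<sigma>) (at \<sigma> within {0..\<sigma>})"
        using P2 nz[OF \<open>\<sigma> \<in> _\<close>] has_vector_derivative_at_within by blast
      have eqon: "\<And>x. x \<in> {0..\<sigma>} \<Longrightarrow> r x = p x"
        using below eq\<sigma> by (metis atLeastAtMost_iff order_le_less)
      have hp': "(r has_vector_derivative pd \<sigma>) (at \<sigma> within {0..\<sigma>})"
        by (rule has_vector_derivative_transform[OF _ eqon hp]) (use s0 in auto)
      have nb: "at \<sigma> within {0..\<sigma>} \<noteq> bot"
        using s0 by (simp add: at_within_Icc_at_left)
      show ?thesis by (rule vector_derivative_unique_within[OF nb hp' hr])
    qed
    have "\<forall>s\<in>{\<sigma>..\<sigma>+\<delta>}. p s = r s"
      apply (rule loc_uniq[of "p \<sigma>" e G L \<sigma> "\<sigma>+\<delta>" p r pd rd])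
      using L \<delta> inb P1 P2 nz eq\<sigma> dd by auto
    then show ?thesis using \<delta> by blast
  next
    case True
    have s0: "0 < \<sigma>" using True p0 ab \<sigma>0 unfolding p_def by (metis add_0_right order_le_less)
    have "q (a + \<sigma>) = 0" using True unfolding p_def by simp
    then obtain e1 where e1: "e1 > 0" "\<forall>s. 0 < \<bar>s\<bar> \<and> \<bar>s\<bar> < e1 \<longrightarrow> q (a + \<sigma> + s) = q (a + \<sigma> - s)"
      using coll by blast
    have "q (b - \<sigma>) = 0" using True eq\<sigma> unfolding r_def by simp
    then obtain e2 where e2: "e2 > 0" "\<forall>s. 0 < \<bar>s\<bar> \<and> \<bar>s\<bar> < e2 \<longrightarrow> q (b - \<sigma> + s) = q (b - \<sigma> - s)"
      using coll by blast
    define \<delta> where "\<delta> = min (min e1 e2) \<sigma> / 2"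
    have \<delta>: "\<delta> > 0" "\<delta> < e1" "\<delta> < e2" "\<delta> < \<sigma>" unfolding \<delta>_def using e1 e2 s0 by auto
    have "\<forall>s\<in>{\<sigma>..\<sigma>+\<delta>}. p s = r s"
    proof
      fix s assume s: "s \<in> {\<sigma>..\<sigma>+\<delta>}"
      show "p s = r s"
      proof (cases "s = \<sigma>")
        case True then show ?thesis using eq\<sigma> by simp
      next
        case False
        define u where "u = s - \<sigma>"
        have u: "0 < u" "u < e1" "u < e2" "u < \<sigma>" using s False \<delta> unfolding u_def by auto
        have "p s = q (a + \<sigma> + u)" unfolding p_def u_def by simp
        also have "\<dots> = q (a + \<sigma> - u)" using e1 u by simp
        also have "\<dots> = p (\<sigma> - u)" unfolding p_def by (simp add: algebra_simps)
        also have "\<dots> = r (\<sigma> - u)" using below u by simp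
        also have "\<dots> = q (b - \<sigma> + u)" unfolding r_def by (simp add: algebra_simps)
        also have "\<dots> = q (b - \<sigma> - u)" using e2 u by simp
        also have "\<dots> = r s" unfolding r_def u_def by (simp add: algebra_simps)
        finally show ?thesis .
      qed
    qed
    then show ?thesis using \<delta> by blast
  qed
  then obtain \<delta> where \<delta>: "\<delta> > 0" "\<forall>s\<in>{\<sigma>..\<sigma>+\<delta>}. p s = r s" by blast
  have "\<sigma> < \<sigma> + \<delta>" using \<delta> by simp
  then obtain x where x: "x \<in> A" "x < \<sigma> + \<delta>" using cInf_less_iff[OF An(1,2)] unfolding \<sigma>_def by blast
  have "\<sigma> \<le> x" unfolding \<sigma>_def using An x by (intro cInf_lower) auto
  then have "p x = r x" using \<delta> x by auto
  then show False using x unfolding A_def by simp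
qed

lemma negself: fixes x :: "real^2" shows "x = - x \<Longrightarrow> x = 0"
  by (auto simp: vec_eq_iff)

theorem mainTheorem1:
  fixes U :: "(real^2) set" and V1 :: "real^2 \<Rightarrow> real" and c :: real and c1 :: ereal
    and T :: real and q q' :: "real \<Rightarrow> real^2"
  assumes U_open: "open U" and U_zero: "0 \<in> U"
    and U_disk: "diffeomorphic_sets (closure U) (cball 0 1)"
    and V1_smooth: "smooth_on U V1"
    and c1_prop: "\<forall>c'. ereal c' < c1 \<longrightarrow> good_energy U V1 c'"
    and c_less: "ereal c < c1"
    and orbit: "stark_periodic_orbit U V1 c T q q'"
    and in_hill: "\<forall>t. q t \<in> hill_bounded U V1 c"
    and tangency: "\<exists>t0 t1 l. \<not> (\<exists>k::int. t1 - t0 = of_int k * T) \<and>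
        q t0 = q t1 \<and> q t1 \<noteq> 0 \<and> q' t1 \<noteq> 0 \<and> l > 0 \<and> q' t0 = - (l *\<^sub>R q' t1)"
  shows "(\<forall>t. q t \<noteq> 0 \<and> q' t \<noteq> 0 \<longrightarrow>
            (\<exists>t' l. \<not> (\<exists>k::int. t' - t = of_int k * T) \<and> q t' = q t \<and> l > 0 \<and>
                    q' t = - (l *\<^sub>R q' t')))
       \<and> ((\<exists>t. q t \<in> frontier (hill_bounded U V1 c)) \<or> (\<exists>t. q t = 0))"
proof -
  have Tpos: "T > 0" and cont: "continuous_on UNIV q" and per: "\<forall>t. q (t + T) = q t"
    and inU: "\<forall>t. q t \<in> U"
    and coll: "\<forall>t. q t = 0 \<longrightarrow> (\<exists>e>0. \<forall>s. 0 < \<bar>s\<bar> \<and> \<bar>s\<bar> < e \<longrightarrow> q (t + s) \<noteq> 0 \<and> q (t + s) = q (t - s))"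
    using orbit unfolding stark_periodic_orbit_def by blast+
  obtain q'' where q'': "\<forall>t. q t \<noteq> 0 \<longrightarrow>
        (q has_vector_derivative q' t) (at t) \<and>
        (q' has_vector_derivative q'' t) (at t) \<and>
        (stark_V V1 has_derivative (\<lambda>h. - (q'' t \<bullet> h))) (at (q t)) \<and>
        (norm (q' t))\<^sup>2 / 2 + stark_V V1 (q t) = c"
    using orbit unfolding stark_periodic_orbit_def by blast
  obtain G G' where dG: "\<forall>x\<in>U-{0}. (G has_derivative G' x) (at x)"
    and cG: "\<forall>h. continuous_on (U-{0}) (\<lambda>x. G' x h)"
    and dV: "\<forall>x\<in>U-{0}. (stark_V V1 has_derivative (\<lambda>h. G x \<bullet> h)) (at x)"
    using grad_setup[OF V1_smooth U_open] by blast
  have qG: "q'' t = - G (q t)" if "q t \<noteq> 0" for t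
  proof -
    have h1: "(stark_V V1 has_derivative (\<lambda>h. - (q'' t \<bullet> h))) (at (q t))" using q'' that by blast
    have "q t \<in> U - {0}" using inU that by blast
    then have h2: "(stark_V V1 has_derivative (\<lambda>h. G (q t) \<bullet> h)) (at (q t))" using dV by blast
    have "(\<lambda>h. - (q'' t \<bullet> h)) = (\<lambda>h. G (q t) \<bullet> h)"
      by (rule has_derivative_unique[OF h1 h2])
    then have "- (q'' t \<bullet> (q'' t + G (q t))) = G (q t) \<bullet> (q'' t + G (q t))" by metis
    then have "(q'' t + G (q t)) \<bullet> (q'' t + G (q t)) = 0" by (simp add: algebra_simps inner_commute)
    then show ?thesis by (simp add: add_eq_0_iff)
  qed
  have ode: "\<forall>t. q t \<noteq> 0 \<longrightarrow> (q has_vector_derivative q' t) (at t) \<and> (q' has_vector_derivative - G (q t)) (at t)"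
  proof (intro allI impI conjI)
    fix t assume "q t \<noteq> 0"
    then show "(q has_vector_derivative q' t) (at t)" using q'' by blast
    have "(q' has_vector_derivative q'' t) (at t)" using q'' \<open>q t \<noteq> 0\<close> by blast
    then show "(q' has_vector_derivative - G (q t)) (at t)" using qG[OF \<open>q t \<noteq> 0\<close>] by simp
  qed
  have energy: "(norm (q' t))\<^sup>2 / 2 + stark_V V1 (q t) = c" if "q t \<noteq> 0" for t
    using q'' that by blast
  have lip: "\<forall>t. q t \<noteq> 0 \<longrightarrow> (\<exists>e>0. \<exists>L. 0 \<notin> cball (q t) e \<and>
        (\<forall>x\<in>cball (q t) e. \<forall>y\<in>cball (q t) e. norm (G x - G y) \<le> L * norm (x - y)))"
  proof (intro allI impI)
    fix t assume qt: "q t \<noteq> 0"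
    have "open (U - {0})" using U_open by (simp add: open_delete)
    then obtain e L where e: "e > 0" and L: "\<forall>x\<in>cball (q t) e. \<forall>y\<in>cball (q t) e. norm (G x - G y) \<le> L * norm (x - y)"
      using c1_lip[of "U - {0}" "q t" G G'] dG cG inU qt by blast
    define e' where "e' = min e (norm (q t) / 2)"
    have e': "e' > 0" "cball (q t) e' \<subseteq> cball (q t) e" "0 \<notin> cball (q t) e'"
      unfolding e'_def using e qt by auto
    show "\<exists>e>0. \<exists>L. 0 \<notin> cball (q t) e \<and>
        (\<forall>x\<in>cball (q t) e. \<forall>y\<in>cball (q t) e. norm (G x - G y) \<le> L * norm (x - y))"
      using e' L by blast
  qed
  obtain t0 t1 l where tg: "\<not> (\<exists>k::int. t1 - t0 = of_int k * T)" "q t0 = q t1" "q t1 \<noteq> 0"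
    "q' t1 \<noteq> 0" "l > 0" "q' t0 = - (l *\<^sub>R q' t1)"
    using tangency by blast
  have ea: "(norm (q' t0))\<^sup>2 / 2 + stark_V V1 (q t1) = c" using energy[of t0] tg(2) tg(3) by metis
  have eb: "(norm (q' t1))\<^sup>2 / 2 + stark_V V1 (q t1) = c" using energy[of t1] tg(3) by blast
  have "(norm (q' t0))\<^sup>2 = (norm (q' t1))\<^sup>2" using ea eb by linarith
  then have "norm (q' t0) = norm (q' t1)" by (simp add: power2_eq_iff_nonneg)
  moreover have "norm (q' t0) = l * norm (q' t1)" using tg(5,6) by simp
  ultimately have "(l - 1) * norm (q' t1) = 0" by (simp add: algebra_simps)
  then have l1: "l = 1" using tg(4) by simp
  have d0: "q' t0 = - q' t1" using tg(6) l1 by simp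
  then have d1: "q' t1 = - q' t0" by simp
  have nz0: "q t0 \<noteq> 0" using tg(2,3) by simp
  have F1: "\<forall>s\<ge>0. q (t0 + s) = q (t1 - s)"
    by (rule forward[OF cont coll ode lip tg(2) tg(3) d0])
  have F2: "\<forall>s\<ge>0. q (t1 + s) = q (t0 - s)"
    by (rule forward[OF cont coll ode lip tg(2)[symmetric] nz0 d1])
  have sym: "q x = q (t0 + t1 - x)" for x
  proof (cases "x \<ge> t0")
    case True
    then show ?thesis using F1[rule_format, of "x - t0"] by (simp add: algebra_simps)
  next
    case False
    then show ?thesis using F2[rule_format, of "t0 - x"] by (simp add: algebra_simps)
  qed
  have pern: "q (t + real n * T) = q t" for n t
  proof (induction n arbitrary: t)
    case 0 then show ?case by simp
  next
    case (Suc n)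
    have "q (t + real (Suc n) * T) = q ((t + real n * T) + T)" by (simp add: algebra_simps)
    also have "\<dots> = q t" using per Suc by simp
    finally show ?case .
  qed
  have peri: "q (t + of_int k * T) = q t" for k :: int and t
  proof (cases "k \<ge> 0")
    case True
    then have "q (t + of_int k * T) = q (t + real (nat k) * T)" by simp
    then show ?thesis using pern[of t "nat k"] by simp
  next
    case False
    then have "t = (t + of_int k * T) + real (nat (-k)) * T" by (simp add: algebra_simps)
    then have "q t = q ((t + of_int k * T) + real (nat (-k)) * T)" by metis
    then show ?thesis using pern[of "t + of_int k * T" "nat (-k)"] by simp
  qed
  have shiftd: "((\<lambda>x. q (x + d)) has_vector_derivative q' (t + d)) (at t)" if "q (t + d) \<noteq> 0" for t d
  proof -
    have i: "((\<lambda>x. x + d) has_vector_derivative 1) (at t)" by (auto intro!: derivative_eq_intros)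
    have "((q \<circ> (\<lambda>x. x + d)) has_vector_derivative (1 *\<^sub>R q' (t + d))) (at t)"
      by (rule vector_diff_chain_at[OF i]) (use ode that in simp)
    then show ?thesis by (simp add: o_def)
  qed
  have perd: "q' (t + of_int k * T) = q' t" if "q t \<noteq> 0" for t k
  proof -
    have "q (t + of_int k * T) \<noteq> 0" using peri that by simp
    then have "((\<lambda>x. q (x + of_int k * T)) has_vector_derivative q' (t + of_int k * T)) (at t)"
      by (rule shiftd)
    moreover have "(\<lambda>x. q (x + of_int k * T)) = q" using peri by auto
    ultimately have a: "(q has_vector_derivative q' (t + of_int k * T)) (at t)" by simp
    have b: "(q has_vector_derivative q' t) (at t)" using ode that by blast
    show ?thesis by (rule vector_derivative_unique_at[OF a b])
  qed
  have revd: "q' t = - q' (t0 + t1 - t)" if "q t \<noteq> 0" for t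
  proof -
    have nz: "q (t0 + t1 - t) \<noteq> 0" using sym that by metis
    have i: "((\<lambda>x. t0 + t1 - x) has_vector_derivative -1) (at t)" by (auto intro!: derivative_eq_intros)
    have "((q \<circ> (\<lambda>x. t0 + t1 - x)) has_vector_derivative ((-1) *\<^sub>R q' (t0 + t1 - t))) (at t)"
      by (rule vector_diff_chain_at[OF i]) (use ode nz in simp)
    moreover have "q \<circ> (\<lambda>x. t0 + t1 - x) = q" using sym by (auto simp: o_def)
    ultimately have a: "(q has_vector_derivative (- q' (t0 + t1 - t))) (at t)" by simp
    have b: "(q has_vector_derivative q' t) (at t)" using ode that by blast
    show ?thesis by (rule vector_derivative_unique_at[OF b a])
  qed
  have claim1: "\<forall>t. q t \<noteq> 0 \<and> q' t \<noteq> 0 \<longrightarrow>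
            (\<exists>t' l. \<not> (\<exists>k::int. t' - t = of_int k * T) \<and> q t' = q t \<and> l > 0 \<and>
                    q' t = - (l *\<^sub>R q' t'))"
  proof (intro allI impI)
    fix t assume t: "q t \<noteq> 0 \<and> q' t \<noteq> 0"
    define t' where "t' = t0 + t1 - t"
    have "\<not> (\<exists>k::int. t' - t = of_int k * T)"
    proof
      assume "\<exists>k::int. t' - t = of_int k * T"
      then obtain k :: int where "t' - t = of_int k * T" by blast
      then have k: "t' = t + of_int k * T" by simp
      have "q' t' = q' t" using perd[of t k] t k by simp
      moreover have "q' t = - q' t'" using revd[of t] t unfolding t'_def by simp
      ultimately have "q' t = - q' t" by simp
      then show False using t negself by blast
    qed
    moreover have "q t' = q t" using sym[of t] unfolding t'_def by simp
    moreover have "q' t = - (1 *\<^sub>R q' t')" using revd t unfolding t'_def by simp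
    ultimately show "\<exists>t' l. \<not> (\<exists>k::int. t' - t = of_int k * T) \<and> q t' = q t \<and> l > 0 \<and>
                    q' t = - (l *\<^sub>R q' t')" by (intro exI[of _ t'] exI[of _ 1]) auto
  qed
  define m where "m = (t0 + t1) / 2"
  have claim2: "(\<exists>t. q t \<in> frontier (hill_bounded U V1 c)) \<or> (\<exists>t. q t = 0)"
  proof (cases "q m = 0")
    case True then show ?thesis by blast
  next
    case False
    have mm: "t0 + t1 - m = m" unfolding m_def by (simp add: field_simps)
    have "q' m = - q' m" using revd[OF False] unfolding mm .
    then have qm0: "q' m = 0" by (rule negself)
    then have Vc: "stark_V V1 (q m) = c" using energy[OF False] by simp
    have ge: "good_energy U V1 c" using c1_prop c_less by blast
    then obtain D where D: "(stark_V V1 has_derivative D) (at (q m))" "D \<noteq> (\<lambda>h. 0)"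
      using Vc False inU unfolding good_energy_def regular_value_def by blast
    have ex1: "\<exists>!C. C \<in> components (hill_region U V1 c) \<and> bounded C"
      using ge unfolding good_energy_def by blast
    have HBc: "hill_bounded U V1 c \<in> components (hill_region U V1 c)"
      unfolding hill_bounded_def using theI'[OF ex1] by blast
    have HBs: "hill_bounded U V1 c \<subseteq> hill_region U V1 c" using HBc in_components_subset by blast
    let ?x = "q m"
    have "?x \<notin> interior (hill_bounded U V1 c)"
    proof
      assume "?x \<in> interior (hill_bounded U V1 c)"
      then obtain \<epsilon> where \<epsilon>: "\<epsilon> > 0" "ball ?x \<epsilon> \<subseteq> hill_bounded U V1 c"
        unfolding mem_interior by blast
      have lD: "linear D" using D(1) has_derivative_linear by blast
      have "D h = 0" for h
      proof (cases "h = 0")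
        case True then show ?thesis using lD linear_0 by blast
      next
        case hnz: False
        define d where "d = min \<epsilon> (norm ?x) / (norm h + 1)"
        have "min \<epsilon> (norm ?x) > 0" using \<epsilon> False by simp
        moreover have hp: "norm h + 1 > 0" by (simp add: add_nonneg_pos)
        ultimately have d: "d > 0" unfolding d_def by (rule divide_pos_pos)
        have i: "((\<lambda>\<tau>::real. ?x + \<tau> *\<^sub>R h) has_derivative (\<lambda>\<tau>. \<tau> *\<^sub>R h)) (at 0)"
          by (auto intro!: derivative_eq_intros)
        have "((\<lambda>\<tau>::real. stark_V V1 (?x + \<tau> *\<^sub>R h)) has_derivative (\<lambda>\<tau>. D (\<tau> *\<^sub>R h))) (at 0)"
          using has_derivative_compose[OF i, of "stark_V V1" D] D(1) by (simp add: o_def)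
        moreover have "(\<lambda>\<tau>. D (\<tau> *\<^sub>R h)) = (*) (D h)"
          using lD by (auto simp: fun_eq_iff linear_scale mult.commute)
        ultimately have der: "((\<lambda>\<tau>::real. stark_V V1 (?x + \<tau> *\<^sub>R h)) has_real_derivative D h) (at 0)"
          unfolding has_field_derivative_def by metis
        have mx: "\<forall>y. \<bar>0 - y\<bar> < d \<longrightarrow> stark_V V1 (?x + y *\<^sub>R h) \<le> stark_V V1 (?x + 0 *\<^sub>R h)"
        proof (intro allI impI)
          fix y :: real assume y: "\<bar>0 - y\<bar> < d"
          have "norm (y *\<^sub>R h) = \<bar>y\<bar> * norm h" by simp
          also have "\<dots> \<le> \<bar>y\<bar> * (norm h + 1)" by (simp add: mult_left_mono)
          also have "\<dots> < d * (norm h + 1)"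
            using y hp by (intro mult_strict_right_mono) auto
          also have "\<dots> = min \<epsilon> (norm ?x)" unfolding d_def
            using hp by simp
          finally have ny: "norm (y *\<^sub>R h) < min \<epsilon> (norm ?x)" .
          then have "?x + y *\<^sub>R h \<in> ball ?x \<epsilon>" by (simp add: dist_norm)
          then have "?x + y *\<^sub>R h \<in> hill_region U V1 c" using \<epsilon> HBs by blast
          moreover have "?x + y *\<^sub>R h \<noteq> 0"
          proof
            assume "?x + y *\<^sub>R h = 0"
            then have "?x = - (y *\<^sub>R h)" by (simp add: eq_neg_iff_add_eq_0)
            then have "norm ?x = norm (y *\<^sub>R h)" by simp
            then show False using ny by simp
          qed
          ultimately show "stark_V V1 (?x + y *\<^sub>R h) \<le> stark_V V1 (?x + 0 *\<^sub>R h)"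
            using Vc unfolding hill_region_def by simp
        qed
        show "D h = 0" by (rule DERIV_local_max[OF der d mx])
      qed
      then show False using D(2) by auto
    qed
    moreover have "?x \<in> closure (hill_bounded U V1 c)" using in_hill closure_subset by blast
    ultimately have "?x \<in> frontier (hill_bounded U V1 c)" unfolding frontier_def by blast
    then show ?thesis by blast
  qed
  show ?thesis using claim1 claim2 by blast
qed

end
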